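(* For every integer $n\ge 0$, \[ B_{n,q}=\sum_{k=0}^{n}(-1)^k2^{n-2k}k!\,S_2(n,k)\,d_{k,q}. \]
   Context: Let $p$ be a fixed odd prime, $\mathbb{C}_p$ the completion of the algebraic closure of $\mathbb{Q}_p$, with $|p|_p=1/p$. Let $q\in\mathbb{C}_p$ with $|1-q|_p<p^{-1/(p-1)}$, and $\log$ the $p$-adic logarithm. The $q$-Bernoulli numbers $B_{n,q}$ are defined by $\frac{(q-1)+\frac{q-1}{\log q}t}{qe^t-1}=\sum_{n\ge0}B_{n,q}\frac{t^n}{n!}$. The numbers $d_{n,q}$ are defined by \[ \frac{q-1+\frac{q-1}{\log q}\cdot\frac12\log(1-4t)}{q\sqrt{1-4t}-1}=\sum_{n=0}^{\infty}d_{n,q}t^n, \] for $t\in\mathbb{C}_p$ with $|t|_p<p^{-1/(p-1)}$. $S_2(n,k)$ are the Stirling numbers of the second kind, defined by $x^n=\sum_{l=0}^n S_2(n,l)(x)_l$, where $(x)_0=1$, $(x)_l=x(x-1)\cdots(x-l+1)$. *)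

theory Defs
  imports "HOL-Computational_Algebra.Formal_Power_Series" "HOL-Combinatorics.Stirling"
begin

text \<open>Generating functions are treated as formal power series over a field of
characteristic 0 containing q and L = log q.\<close>

definition qbern_gf :: "'a::field_char_0 \<Rightarrow> 'a \<Rightarrow> 'a fps" where
  "qbern_gf q L =
     (fps_const (q - 1) + fps_const ((q - 1) / L) * fps_X) /
     (fps_const q * fps_exp 1 - 1)"

definition qbern :: "'a::field_char_0 \<Rightarrow> 'a \<Rightarrow> nat \<Rightarrow> 'a" where
  "qbern q L n = fact n * fps_nth (qbern_gf q L) n"

definition sqrt_1m4t :: "'a::field_char_0 fps" where
  "sqrt_1m4t = fps_binomial (1/2) oo (- fps_const 4 * fps_X)"

definition log_1m4t :: "'a::field_char_0 fps" where
  "log_1m4t = fps_ln 1 oo (- fps_const 4 * fps_X)"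

definition d_gf :: "'a::field_char_0 \<Rightarrow> 'a \<Rightarrow> 'a fps" where
  "d_gf q L =
     (fps_const (q - 1) + fps_const ((q - 1) / L) * fps_const (1/2) * log_1m4t) /
     (fps_const q * sqrt_1m4t - 1)"

definition dq :: "'a::field_char_0 \<Rightarrow> 'a \<Rightarrow> nat \<Rightarrow> 'a" where
  "dq q L n = fps_nth (d_gf q L) n"

end

theory Submission
  imports Defs
begin

lemma deriv_G:
  fixes c :: "'a::field_char_0"
  shows "fps_deriv ((fps_exp c - 1)^Suc k) =
     fps_const (of_nat (Suc k) * c) * ((fps_exp c - 1)^Suc k + (fps_exp c - 1)^k)"
proof -
  have "fps_deriv ((fps_exp c - 1)^Suc k) = fps_const (of_nat (Suc k)) * (fps_const c * fps_exp c) * (fps_exp c - 1)^k"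
    by (simp only: fps_deriv_power) simp
  also have "\<dots> = fps_const (of_nat (Suc k)) * fps_const c * ((fps_exp c - 1) * (fps_exp c - 1)^k + (fps_exp c - 1)^k)"
    by (simp add: algebra_simps)
  also have "\<dots> = fps_const (of_nat (Suc k) * c) * ((fps_exp c - 1)^Suc k + (fps_exp c - 1)^k)"
    by (simp only: fps_const_mult power_Suc)
  finally show ?thesis .
qed

lemma G_nth:
  fixes c :: "'a::field_char_0"
  shows "fps_nth ((fps_exp c - 1)^k) n = c^n * of_nat (fact k * Stirling n k) / fact n"
proof (induction n arbitrary: k)
  case 0
  then show ?case by (cases k) auto
next
  case (Suc n)
  show ?case
  proof (cases k)
    case 0
    then show ?thesis by simp
  next
    case (Suc j)
    have "fps_nth (fps_deriv ((fps_exp c - 1)^Suc j)) n = fps_nth (fps_const (of_nat (Suc j) * c) * ((fps_exp c - 1)^Suc j + (fps_exp c - 1)^j)) n"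
      by (simp only: deriv_G)
    hence "of_nat (Suc n) * fps_nth ((fps_exp c - 1)^Suc j) (Suc n) = of_nat (Suc j) * c * (fps_nth ((fps_exp c - 1)^Suc j) n + fps_nth ((fps_exp c - 1)^j) n)"
      unfolding fps_deriv_nth fps_mult_left_const_nth fps_add_nth by (simp add: algebra_simps)
    hence "fps_nth ((fps_exp c - 1)^Suc j) (Suc n) = of_nat (Suc j) * c * (fps_nth ((fps_exp c - 1)^Suc j) n + fps_nth ((fps_exp c - 1)^j) n) / of_nat (Suc n)"
      by (simp add: field_simps del: of_nat_Suc)
    also have "\<dots> = of_nat (Suc j) * c * (c^n * of_nat (fact (Suc j) * Stirling n (Suc j)) / fact n + c^n * of_nat (fact j * Stirling n j) / fact n) / of_nat (Suc n)"
      by (simp only: Suc.IH)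
    also have "\<dots> = c ^ Suc n * of_nat (fact (Suc j) * Stirling (Suc n) (Suc j)) / fact (Suc n)"
      by (simp add: field_simps fact_Suc)
    finally show ?thesis using Suc by simp
  qed
qed

lemma powi_lem: "(2::'a::field_char_0) powi (int n - 2 * int k) = 2^n / 4^k"
proof -
  have "(2::'a) powi (int n - 2 * int k) = 2 powi (int n) / 2 powi (int (2*k))"
    by (subst power_int_diff) auto
  also have "(2::'a) powi (int (2*k)) = 4^k" by (simp only: power_int_of_nat power_mult) simp
  also have "(2::'a) powi (int n) = 2^n" by simp
  finally show ?thesis .
qed

definition E2 :: "'a::field_char_0 fps" where "E2 = fps_exp 2 - 1"
definition TT :: "'a::field_char_0 fps" where "TT = fps_const (-1/4) * E2"

lemma E2_0 [simp]: "fps_nth E2 0 = 0" by (simp add: E2_def)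
lemma TT_0 [simp]: "fps_nth TT 0 = 0" by (simp add: TT_def)

lemma lin_TT: "(- fps_const 4 * fps_X) oo TT = (E2 :: 'a::field_char_0 fps)"
proof -
  have "(- fps_const 4 * fps_X :: 'a fps) = fps_const (-4) * fps_X" by simp
  moreover have "(fps_const (-4) * fps_X) oo TT = fps_const (-4) * (fps_X oo (TT::'a fps))"
    by (rule fps_const_mult_apply_left[symmetric])
  ultimately have "(- fps_const 4 * fps_X) oo TT = fps_const (-4) * (fps_X oo (TT::'a fps))"
    by simp
  also have "\<dots> = fps_const (-4) * fps_const (-1/4) * E2"
    by (simp add: TT_def mult.assoc)
  also have "\<dots> = E2" by simp
  finally show ?thesis .
qed

lemma sqrt_TT: "sqrt_1m4t oo TT = (fps_exp 1 :: 'a::field_char_0 fps)"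
proof -
  define S :: "'a fps" where "S = fps_binomial (1/2) oo E2"
  have "sqrt_1m4t oo TT = S"
  proof -
    have "sqrt_1m4t oo TT = fps_binomial (1/2) oo ((- fps_const 4 * fps_X) oo (TT::'a fps))"
      unfolding sqrt_1m4t_def by (rule fps_compose_assoc[symmetric]) auto
    also have "\<dots> = S" by (simp only: lin_TT S_def)
    finally show ?thesis .
  qed
  moreover have "S^2 = fps_exp 1 ^ 2"
  proof -
    have "S^2 = fps_binomial (1/2) ^ 2 oo E2"
      unfolding S_def by (simp add: fps_compose_power)
    also have "fps_binomial (1/2) ^ 2 = (fps_binomial 1 :: 'a fps)"
      by (simp add: fps_binomial_power)
    also have "fps_binomial 1 oo E2 = (fps_exp 2 :: 'a fps)"
      by (simp add: fps_binomial_1 fps_compose_add_distrib E2_def)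
    also have "\<dots> = fps_exp 1 ^ 2" by (simp add: fps_exp_power_mult)
    finally show ?thesis .
  qed
  moreover have "fps_nth S 0 = 1" by (simp add: S_def)
  ultimately show ?thesis
  proof -
    assume a: "sqrt_1m4t oo TT = S" "S^2 = fps_exp 1 ^ 2" "fps_nth S 0 = 1"
    have "(S - fps_exp 1) * (S + fps_exp 1) = 0"
      using a(2) by (simp add: algebra_simps power2_eq_square)
    moreover have "S + fps_exp 1 \<noteq> 0"
    proof
      assume "S + fps_exp 1 = 0"
      hence "fps_nth (S + fps_exp 1) 0 = 0" by simp
      thus False using a(3) by simp
    qed
    ultimately have "S = fps_exp 1" by simp
    thus ?thesis using a(1) by simp
  qed
qed

lemma log_TT: "log_1m4t oo TT = (fps_const 2 * fps_X :: 'a::field_char_0 fps)"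
proof -
  have e: "E2 = (fps_exp 1 - 1) oo (fps_const (2::'a) * fps_X)"
    by (simp add: E2_def fps_compose_sub_distrib)
  have "log_1m4t oo TT = fps_ln 1 oo (E2::'a fps)"
  proof -
    have "log_1m4t oo TT = fps_ln 1 oo ((- fps_const 4 * fps_X) oo (TT::'a fps))"
      unfolding log_1m4t_def by (rule fps_compose_assoc[symmetric]) auto
    also have "\<dots> = fps_ln 1 oo E2" by (simp only: lin_TT)
    finally show ?thesis .
  qed
  also have "\<dots> = fps_inv (fps_exp 1 - 1) oo ((fps_exp 1 - 1) oo (fps_const (2::'a) * fps_X))"
    by (simp add: fps_ln_fps_exp_inv e)
  also have "\<dots> = (fps_inv (fps_exp 1 - 1) oo (fps_exp 1 - 1)) oo (fps_const (2::'a) * fps_X)"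
    by (rule fps_compose_assoc) auto
  also have "\<dots> = fps_const 2 * fps_X"
    by (simp add: fps_inv_fps_exp_compose)
  finally show ?thesis .
qed

lemma dgf_TT:
  fixes q L :: "'a::field_char_0"
  assumes "q \<noteq> 1"
  shows "d_gf q L oo TT = qbern_gf q L"
proof -
  have s0: "fps_nth (sqrt_1m4t :: 'a fps) 0 = 1" by (simp add: sqrt_1m4t_def)
  have d0: "fps_nth (fps_const q * sqrt_1m4t - 1) 0 \<noteq> 0" using assms s0 by simp
  have "d_gf q L oo TT =
     ((fps_const (q - 1) + fps_const ((q - 1) / L) * fps_const (1/2) * log_1m4t) oo TT) /
     ((fps_const q * sqrt_1m4t - 1) oo TT)"
    unfolding d_gf_def by (rule fps_divide_compose[OF TT_0 d0])
  also have "(fps_const (q - 1) + fps_const ((q - 1) / L) * fps_const (1/2) * log_1m4t) oo TT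
      = fps_const (q - 1) + fps_const ((q - 1) / L) * fps_const (1/2) * (fps_const 2 * fps_X)"
    by (simp add: fps_compose_add_distrib mult.assoc log_TT flip: fps_const_mult_apply_left)
  also have "fps_const ((q - 1) / L) * fps_const (1/2) * (fps_const 2 * fps_X) = fps_const ((q - 1) / L * (1/2) * 2) * (fps_X :: 'a fps)"
    by (simp only: mult.assoc[symmetric] fps_const_mult)
  also have "(q - 1) / L * (1/2) * 2 = (q - 1) / L" by (simp only: mult.assoc) simp
  also have "(fps_const q * sqrt_1m4t - 1) oo TT = fps_const q * fps_exp 1 - 1"
    by (simp add: fps_compose_sub_distrib sqrt_TT flip: fps_const_mult_apply_left)
  finally show ?thesis unfolding qbern_gf_def .
qed

lemma TT_pow_nth: "fps_nth (TT^i) n = (-1/4)^i * (2^n * of_nat (fact i * Stirling n i) / fact n :: 'a::field_char_0)"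
  by (simp add: TT_def power_mult_distrib fps_const_power E2_def G_nth)

theorem theorem4:
  fixes q L :: "'a::field_char_0" and n :: nat
  assumes "q \<noteq> 1" and "L \<noteq> 0"
  shows "qbern q L n =
    (\<Sum>k=0..n. (-1)^k * 2 powi (int n - 2 * int k) * fact k * of_nat (Stirling n k) * dq q L k)"
proof -
  have "qbern q L n = fact n * fps_nth (d_gf q L oo TT) n"
    by (simp add: qbern_def dgf_TT assms)
  also have "\<dots> = fact n * (\<Sum>k=0..n. dq q L k * fps_nth (TT^k) n)"
    by (simp add: fps_compose_nth dq_def)
  also have "\<dots> = (\<Sum>k=0..n. (-1)^k * 2 powi (int n - 2 * int k) * fact k * of_nat (Stirling n k) * dq q L k)"
    unfolding sum_distrib_left
  proof (rule sum.cong[OF refl])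
    fix k assume "k \<in> {0..n}"
    show "fact n * (dq q L k * fps_nth (TT^k) n) = (-1)^k * 2 powi (int n - 2 * int k) * fact k * of_nat (Stirling n k) * dq q L k"
    proof -
      have "(-1/4::'a)^k = (-1)^k / 4^k" by (induct k) simp_all
      thus ?thesis unfolding TT_pow_nth powi_lem by (simp add: field_simps)
    qed
  qed
  finally show ?thesis .
qed

end
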